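(* For every instance, $H^{PW''}\le \tfrac{32000}{16947}H^*$ (note $\tfrac{32000}{16947}\approx 1.888$). That is, the approximation ratio of algorithm PW'' never exceeds $\tfrac{32000}{16947}$.
   Context: An instance consists of an integer $n\ge 1$ and growth rates $1=h(1)\ge h(2)\ge\cdots\ge h(n)>0$ of bamboos $b_1,\dots,b_n$. Bamboo Garden Trimming (discrete version): - All heights are $0$ initially. - On each day $t=1,2,\dots$ every bamboo $b_j$ grows by $h(j)$. - At the end of each day the gardener cuts exactly one bamboo $\sigma(t)\in\{1,\dots,n\}$ back to height $0$. The height of a schedule $\sigma:\mathbb{N}\to\{1,\dots,n\}$ is the supremum, over all days $t$ and all $j$, of the height of $b_j$ at the end of day $t$ just before the cut. $H^*$ denotes the infimum of this height over all schedules. Value of algorithm PW'': - Split $\{1,\dots,n\}$ into four sets: - $S_1=\{j: \tfrac23<h(j)\le 1\}$; - $S_2=\{j:\tfrac12<h(j)\le\tfrac23\}$; - $S_3=\{j: h(j)\le\tfrac12 \text{ and } \tfrac23 2^{-k}<h(j)\le 2^{-k}\text{ for some integer }k\ge1\}$; - $S_4=\{j: h(j)\le\tfrac12\text{ and } 2^{-(k+1)}<h(j)\le \tfrac23 2^{-k}\text{ for some integer }k\ge 1\}$. - Modified growths: $h''(j)=2^{-k}$ for $j\in S_3$ and $h''(j)=\tfrac23 2^{-k}$ for $j\in S_4$, with $k$ as in the definition of the set. - Let $\pi_1=|S_1|$, $sh_3=\sum_{j\in S_3}h''(j)$, $sh_4=\sum_{j\in S_4}h''(j)$, $\pi_3=\lfloor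 sh_3\rfloor$, $\pi_4=\lfloor sh_4\rfloor$, $f_3=sh_3-\pi_3$, $f_4=sh_4-\pi_4$. - Option (a): $\pi_R(a)=\lceil f_3+f_4\rceil$ and $z(a)=\pi_1+|S_2|+\pi_3+\pi_4+\pi_R(a)$. - Option (b): if $S_2=\emptyset$ put $z(b)=+\infty$. Otherwise let $h^*=\max_{j\in S_2}h(j)$ and $f_2=\tfrac12$ if $|S_2|$ is odd, $f_2=0$ if $|S_2|$ is even. Then $\pi_R(b)=\lceil f_2+f_3+f_4\rceil$ and $z(b)=2h^*\,(\pi_1+\lfloor |S_2|/2\rfloor+\pi_3+\pi_4+\pi_R(b))$. - The value returned by algorithm PW'' is $H^{PW''}=\min\{z(a),z(b)\}$. The paper takes this as the maximum height of the periodic pinwheel trimming schedule that it builds from these partitions. *)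

theory Defs
  imports "HOL-Analysis.Analysis"
begin

definition valid_instance :: "nat \<Rightarrow> (nat \<Rightarrow> real) \<Rightarrow> bool" where
  "valid_instance n h \<longleftrightarrow> n \<ge> 1 \<and> h 1 = 1 \<and>
     (\<forall>i j. 1 \<le> i \<and> i \<le> j \<and> j \<le> n \<longrightarrow> h j \<le> h i) \<and> h n > 0"

text \<open>A schedule cuts bamboo sigma t at the end of day t, for days t = 1,2,...
  (the value at 0 is irrelevant).\<close>
definition is_schedule :: "nat \<Rightarrow> (nat \<Rightarrow> nat) \<Rightarrow> bool" where
  "is_schedule n \<sigma> \<longleftrightarrow> (\<forall>t\<ge>1. \<sigma> t \<in> {1..n})"

definition last_cut :: "(nat \<Rightarrow> nat) \<Rightarrow> nat \<Rightarrow> nat \<Rightarrow> nat" where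
  "last_cut \<sigma> j t = Max (insert 0 {s. 1 \<le> s \<and> s < t \<and> \<sigma> s = j})"

text \<open>Height of bamboo j at the end of day t, just before the cut.\<close>
definition height_before_cut :: "(nat \<Rightarrow> real) \<Rightarrow> (nat \<Rightarrow> nat) \<Rightarrow> nat \<Rightarrow> nat \<Rightarrow> real" where
  "height_before_cut h \<sigma> j t = h j * real (t - last_cut \<sigma> j t)"

definition schedule_height :: "nat \<Rightarrow> (nat \<Rightarrow> real) \<Rightarrow> (nat \<Rightarrow> nat) \<Rightarrow> ereal" where
  "schedule_height n h \<sigma> = (SUP t\<in>{1..}. SUP j\<in>{1..n}. ereal (height_before_cut h \<sigma> j t))"

definition opt_height :: "nat \<Rightarrow> (nat \<Rightarrow> real) \<Rightarrow> ereal" where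
  "opt_height n h = (INF \<sigma>\<in>{\<sigma>. is_schedule n \<sigma>}. schedule_height n h \<sigma>)"

definition S1 :: "nat \<Rightarrow> (nat \<Rightarrow> real) \<Rightarrow> nat set" where
  "S1 n h = {j\<in>{1..n}. 2/3 < h j \<and> h j \<le> 1}"

definition S2 :: "nat \<Rightarrow> (nat \<Rightarrow> real) \<Rightarrow> nat set" where
  "S2 n h = {j\<in>{1..n}. 1/2 < h j \<and> h j \<le> 2/3}"

definition S3 :: "nat \<Rightarrow> (nat \<Rightarrow> real) \<Rightarrow> nat set" where
  "S3 n h = {j\<in>{1..n}. h j \<le> 1/2 \<and>
     (\<exists>k::nat. k \<ge> 1 \<and> 2/3 * (1/2)^k < h j \<and> h j \<le> (1/2)^k)}"

definition S4 :: "nat \<Rightarrow> (nat \<Rightarrow> real) \<Rightarrow> nat set" where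
  "S4 n h = {j\<in>{1..n}. h j \<le> 1/2 \<and>
     (\<exists>k::nat. k \<ge> 1 \<and> (1/2)^(k+1) < h j \<and> h j \<le> 2/3 * (1/2)^k)}"

definition h2_S3 :: "real \<Rightarrow> real" where
  "h2_S3 x = (1/2) ^ (THE k::nat. k \<ge> 1 \<and> 2/3 * (1/2)^k < x \<and> x \<le> (1/2)^k)"

definition h2_S4 :: "real \<Rightarrow> real" where
  "h2_S4 x = 2/3 * (1/2) ^ (THE k::nat. k \<ge> 1 \<and> (1/2)^(k+1) < x \<and> x \<le> 2/3 * (1/2)^k)"

definition sh3 :: "nat \<Rightarrow> (nat \<Rightarrow> real) \<Rightarrow> real" where
  "sh3 n h = (\<Sum>j\<in>S3 n h. h2_S3 (h j))"

definition sh4 :: "nat \<Rightarrow> (nat \<Rightarrow> real) \<Rightarrow> real" where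
  "sh4 n h = (\<Sum>j\<in>S4 n h. h2_S4 (h j))"

definition z_a :: "nat \<Rightarrow> (nat \<Rightarrow> real) \<Rightarrow> real" where
  "z_a n h = (let \<pi>3 = \<lfloor>sh3 n h\<rfloor>; \<pi>4 = \<lfloor>sh4 n h\<rfloor>;
                  f3 = sh3 n h - \<pi>3; f4 = sh4 n h - \<pi>4 in
     real (card (S1 n h)) + real (card (S2 n h)) + of_int \<pi>3 + of_int \<pi>4
       + of_int \<lceil>f3 + f4\<rceil>)"

definition z_b :: "nat \<Rightarrow> (nat \<Rightarrow> real) \<Rightarrow> ereal" where
  "z_b n h = (if S2 n h = {} then \<infinity> else
     (let hs = Max (h ` S2 n h);
          f2 = (if odd (card (S2 n h)) then 1/2 else 0 :: real);
          \<pi>3 = \<lfloor>sh3 n h\<rfloor>; \<pi>4 = \<lfloor>sh4 n h\<rfloor>;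
          f3 = sh3 n h - \<pi>3; f4 = sh4 n h - \<pi>4 in
      ereal (2 * hs * (real (card (S1 n h)) + real (card (S2 n h) div 2)
        + of_int \<pi>3 + of_int \<pi>4 + of_int \<lceil>f2 + f3 + f4\<rceil>))))"

definition H_PW2 :: "nat \<Rightarrow> (nat \<Rightarrow> real) \<Rightarrow> ereal" where
  "H_PW2 n h = min (ereal (z_a n h)) (z_b n h)"

end

theory Submission
  imports Defs
begin

lemma key1:
  fixes m b x :: real
  assumes "m \<ge> 1" "b \<ge> 1" "1 < x" "x \<le> 4/3"
  shows "5/3*(m+b+1) + x*(m+b/2+1) \<le> 8/3*(32000/16947) * ((1/30)*2 + (29/30)*(2*m/3 + x/2 + b/2 - 1/6))"
proof -
  have p1: "(x-1)*(m-1) \<ge> 0" "(4/3-x)*(m-1) \<ge> 0" "(x-1)*(b-1) \<ge> 0" "(4/3-x)*(b-1) \<ge> 0"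
    using assms by auto
  have e: "(x-1)*(m-1) = x*m - x - m + 1" "(4/3-x)*(m-1) = 4/3*m - 4/3 - x*m + x"
     "(x-1)*(b-1) = x*b - x - b + 1" "(4/3-x)*(b-1) = 4/3*b - 4/3 - x*b + x" by algebra+
  have e2: "5/3*(m+b+1) + x*(m+b/2+1) = 5/3*m+5/3*b+5/3 + x*m + (x*b)/2 + x" by algebra
  show ?thesis unfolding e2 using p1 e assms by argo
qed

lemma alg:
  fixes m b x l :: real
  assumes "m \<ge> 1" "b \<ge> 1" "1 < x" "x \<le> 4/3" "l \<ge> 2" "l \<ge> 2*m/3 + x/2 + b/2 - 1/6"
  shows "min (m+b+1) (x*(m+b/2+1)) \<le> 32000/16947 * l"
proof -
  have l2: "30*l \<ge> 2 + 29*(2*m/3 + x/2 + b/2 - 1/6)" using assms by argo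
  have key: "5/3*(m+b+1) + x*(m+b/2+1) \<le> 8/3*(32000/16947) * ((1/30)*2 + (29/30)*(2*m/3 + x/2 + b/2 - 1/6))"
    using assms by (intro key1) auto
  have "8/3 * min (m+b+1) (x*(m+b/2+1)) \<le> 5/3*(m+b+1) + x*(m+b/2+1)"
    using min.cobounded1[of "m+b+1" "x*(m+b/2+1)"] min.cobounded2[of "m+b+1" "x*(m+b/2+1)"] by argo
  then show ?thesis using key l2 by argo
qed
lemma alg0:
  fixes m l :: real
  assumes "m \<ge> 1" "l \<ge> 2" "l \<ge> (1+2*m)/3"
  shows "m+1 \<le> 32000/16947 * l"
proof -
  have "10*l \<ge> 2 + 9*((1+2*m)/3)" using assms by argo
  then show ?thesis using assms by argo
qed


definition Nc :: "(nat \<Rightarrow> nat) \<Rightarrow> nat \<Rightarrow> nat \<Rightarrow> nat" where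
  "Nc \<sigma> j T = card {s. 1 \<le> s \<and> s < T \<and> \<sigma> s = j}"

lemma lc_empty:
  assumes "{s. 1 \<le> s \<and> s < t \<and> \<sigma> s = j} = {}"
  shows "last_cut \<sigma> j t = 0"
  unfolding last_cut_def assms by simp

lemma lc_nonempty:
  assumes "{s. 1 \<le> s \<and> s < t \<and> \<sigma> s = j} \<noteq> {}"
  shows "last_cut \<sigma> j t \<in> {s. 1 \<le> s \<and> s < t \<and> \<sigma> s = j}"
    "\<And>s. s \<in> {s. 1 \<le> s \<and> s < t \<and> \<sigma> s = j} \<Longrightarrow> s \<le> last_cut \<sigma> j t"
proof -
  let ?S = "{s. 1 \<le> s \<and> s < t \<and> \<sigma> s = j}"
  have fin: "finite ?S" by (rule finite_subset[of _ "{..<t}"]) auto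
  have eq: "last_cut \<sigma> j t = Max ?S"
    unfolding last_cut_def using fin assms
    by (metis (no_types, lifting) Max_insert Max_in empty_iff max.absorb2 mem_Collect_eq le0)
  show "last_cut \<sigma> j t \<in> ?S" unfolding eq using fin assms by (rule Max_in)
  show "\<And>s. s \<in> ?S \<Longrightarrow> s \<le> last_cut \<sigma> j t" unfolding eq using fin by (rule Max_ge)
qed

lemma gap:
  assumes H: "\<And>t. t \<ge> 1 \<Longrightarrow> h j * real (t - last_cut \<sigma> j t) \<le> H"
  shows "T \<ge> 1 \<Longrightarrow> h j * real T \<le> (real (Nc \<sigma> j T) + 1) * H"
proof (induction T rule: less_induct)
  case (less T)
  let ?S = "{s. 1 \<le> s \<and> s < T \<and> \<sigma> s = j}"
  show ?case
  proof (cases "?S = {}")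
    case True
    then have "last_cut \<sigma> j T = 0" "Nc \<sigma> j T = 0" by (auto simp: lc_empty Nc_def)
    then show ?thesis using H[OF less.prems] by simp
  next
    case False
    define L where "L = last_cut \<sigma> j T"
    have L: "1 \<le> L" "L < T" "\<sigma> L = j" using lc_nonempty(1)[OF False] unfolding L_def by auto
    have Lmax: "\<And>s. s \<in> ?S \<Longrightarrow> s \<le> L" using lc_nonempty(2)[OF False] unfolding L_def by blast
    have seteq: "?S = insert L {s. 1 \<le> s \<and> s < L \<and> \<sigma> s = j}"
      using L Lmax by (auto, fastforce)
    have fin: "finite {s. 1 \<le> s \<and> s < L \<and> \<sigma> s = j}" by (rule finite_subset[of _ "{..<L}"]) auto
    have "Nc \<sigma> j T = Nc \<sigma> j L + 1" unfolding Nc_def seteq using fin by simp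
    moreover have "h j * real L \<le> (real (Nc \<sigma> j L) + 1) * H" using less.IH[OF L(2) L(1)] .
    moreover have "h j * real (T - L) \<le> H" using H[OF less.prems] unfolding L_def by simp
    moreover have "real (T - L) = real T - real L" using L by simp
    ultimately show ?thesis by (simp add: algebra_simps)
  qed
qed

lemma Nc_Suc: "Nc \<sigma> j (Suc T) = Nc \<sigma> j T + (if 1 \<le> T \<and> \<sigma> T = j then 1 else 0)"
proof -
  have fin: "finite {s. 1 \<le> s \<and> s < T \<and> \<sigma> s = j}" by (rule finite_subset[of _ "{..<T}"]) auto
  show ?thesis
  proof (cases "1 \<le> T \<and> \<sigma> T = j")
    case True
    then have "{s. 1 \<le> s \<and> s < Suc T \<and> \<sigma> s = j} = insert T {s. 1 \<le> s \<and> s < T \<and> \<sigma> s = j}" by auto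
    then show ?thesis using True fin unfolding Nc_def by simp
  next
    case False
    then have "{s. 1 \<le> s \<and> s < Suc T \<and> \<sigma> s = j} = {s. 1 \<le> s \<and> s < T \<and> \<sigma> s = j}"
      using less_Suc_eq by auto
    then show ?thesis using False unfolding Nc_def by simp
  qed
qed

lemma Nc_sum:
  assumes "is_schedule n \<sigma>"
  shows "(\<Sum>j\<in>{1..n}. Nc \<sigma> j T) = T - 1"
proof (induction T)
  case 0
  then show ?case by (simp add: Nc_def)
next
  case (Suc T)
  have "(\<Sum>j\<in>{1..n}. Nc \<sigma> j (Suc T)) = (\<Sum>j\<in>{1..n}. Nc \<sigma> j T) + (\<Sum>j\<in>{1..n}. (if 1 \<le> T \<and> \<sigma> T = j then 1 else 0))"
    by (simp add: Nc_Suc sum.distrib)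
  also have "(\<Sum>j\<in>{1..n}. (if 1 \<le> T \<and> \<sigma> T = j then 1 else 0)) = (if 1 \<le> T then 1 else (0::nat))"
  proof (cases "1 \<le> T")
    case True
    then have "\<sigma> T \<in> {1..n}" using assms unfolding is_schedule_def by blast
    then show ?thesis using True by (simp add: sum.delta)
  qed simp
  finally show ?case using Suc.IH by simp
qed



lemma hpos: "valid_instance n h \<Longrightarrow> j \<in> {1..n} \<Longrightarrow> h j > 0"
  unfolding valid_instance_def by (metis atLeastAtMost_iff less_le_trans order.refl not_le)

lemma lb:
  assumes vi: "valid_instance n h" and sch: "is_schedule n \<sigma>"
    and H: "\<And>t j. t \<ge> 1 \<Longrightarrow> j \<in> {1..n} \<Longrightarrow> height_before_cut h \<sigma> j t \<le> H"
  shows "(\<Sum>j\<in>{1..n}. h j) \<le> H" "n \<ge> 2 \<Longrightarrow> 2 \<le> H"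
proof -
  have n1: "n \<ge> 1" and h1: "h 1 = 1" using vi unfolding valid_instance_def by auto
  have G: "\<And>j T. j \<in> {1..n} \<Longrightarrow> T \<ge> 1 \<Longrightarrow> h j * real T \<le> (real (Nc \<sigma> j T) + 1) * H"
    by (rule gap) (use H in \<open>auto simp: height_before_cut_def\<close>)
  have lc11: "last_cut \<sigma> 1 1 = 0" by (rule lc_empty) auto
  have H1: "1 \<le> H" using H[of 1 1] n1 h1 lc11 by (simp add: height_before_cut_def)
  have S: "real T * (\<Sum>j\<in>{1..n}. h j) \<le> (real T - 1 + real n) * H" if T: "T \<ge> 1" for T
  proof -
    have "real T * (\<Sum>j\<in>{1..n}. h j) = (\<Sum>j\<in>{1..n}. h j * real T)" by (simp add: sum_distrib_left mult.commute)
    also have "\<dots> \<le> (\<Sum>j\<in>{1..n}. (real (Nc \<sigma> j T) + 1) * H)" by (rule sum_mono) (use G T in auto)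
    also have "\<dots> = (real (\<Sum>j\<in>{1..n}. Nc \<sigma> j T) + real n) * H"
      by (simp add: sum_distrib_right[symmetric] sum.distrib)
    also have "\<dots> = (real T - 1 + real n) * H" using Nc_sum[OF sch, of T] T by simp
    finally show ?thesis .
  qed
  show "(\<Sum>j\<in>{1..n}. h j) \<le> H"
  proof (rule ccontr)
    assume "\<not> ?thesis"
    then have d: "(\<Sum>j\<in>{1..n}. h j) - H > 0" by simp
    obtain T :: nat where T: "real n * H / ((\<Sum>j\<in>{1..n}. h j) - H) < real T" using reals_Archimedean2 by blast
    have "real n * H / ((\<Sum>j\<in>{1..n}. h j) - H) \<ge> 0" using d H1 by simp
    then have T1: "T \<ge> 1" using T by linarith
    have "real n * H < real T * ((\<Sum>j\<in>{1..n}. h j) - H)" using T d by (simp add: field_simps)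
    moreover have "real T * ((\<Sum>j\<in>{1..n}. h j) - H) \<le> (real n - 1) * H" using S[OF T1] by (simp add: algebra_simps)
    ultimately show False using H1 by (simp add: algebra_simps)
  qed
  show "2 \<le> H" if n2: "n \<ge> 2"
  proof (rule ccontr)
    assume "\<not> 2 \<le> H"
    then have H2: "H < 2" by simp
    have all1: "\<sigma> s = 1" if s: "s \<ge> 1" for s
    proof -
      have "real (Suc s - last_cut \<sigma> 1 (Suc s)) \<le> H" using H[of "Suc s" 1] n1 h1 by (simp add: height_before_cut_def)
      then have "Suc s - last_cut \<sigma> 1 (Suc s) \<le> 1" using H2 by linarith
      then have ge: "last_cut \<sigma> 1 (Suc s) \<ge> s" by simp
      have ne: "{x. 1 \<le> x \<and> x < Suc s \<and> \<sigma> x = 1} \<noteq> {}"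
      proof
        assume "{x. 1 \<le> x \<and> x < Suc s \<and> \<sigma> x = 1} = {}"
        then have "last_cut \<sigma> 1 (Suc s) = 0" by (rule lc_empty)
        then show False using ge s by simp
      qed
      from lc_nonempty(1)[OF ne] ge show ?thesis
        by (metis (mono_tags, lifting) le_antisym less_Suc_eq_le mem_Collect_eq)
    qed
    have N2: "Nc \<sigma> 2 T = 0" for T unfolding Nc_def using all1 by auto
    have h2: "h 2 > 0" using hpos[OF vi, of 2] n2 by simp
    obtain T :: nat where T: "H / h 2 < real T" using reals_Archimedean2 by blast
    have "H / h 2 \<ge> 0" using H1 h2 by simp
    then have T1: "T \<ge> 1" using T by linarith
    have "h 2 * real T \<le> H" using G[of 2 T] n2 T1 N2 by simp
    with T h2 show False by (simp add: field_simps)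
  qed
qed

lemma opt_ge:
  assumes "\<And>\<sigma> H. is_schedule n \<sigma> \<Longrightarrow> (\<And>t j. t \<ge> 1 \<Longrightarrow> j \<in> {1..n} \<Longrightarrow> height_before_cut h \<sigma> j t \<le> H) \<Longrightarrow> r \<le> H"
  shows "ereal r \<le> opt_height n h"
  unfolding opt_height_def
proof (rule INF_greatest)
  fix \<sigma> assume "\<sigma> \<in> {\<sigma>. is_schedule n \<sigma>}"
  then have sch: "is_schedule n \<sigma>" by simp
  show "ereal r \<le> schedule_height n h \<sigma>"
  proof (rule ccontr)
    assume "\<not> ?thesis"
    then have "schedule_height n h \<sigma> < ereal r" by simp
    then obtain z where z: "schedule_height n h \<sigma> < ereal z" "ereal z < ereal r" using ereal_dense2 by blast
    have "height_before_cut h \<sigma> j t \<le> z" if "t \<ge> 1" "j \<in> {1..n}" for t j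
    proof -
      have "ereal (height_before_cut h \<sigma> j t) \<le> schedule_height n h \<sigma>"
        unfolding schedule_height_def
        by (rule SUP_upper2[of t]) (use that in \<open>auto intro: SUP_upper\<close>)
      then have "ereal (height_before_cut h \<sigma> j t) < ereal z" using z(1) by (rule le_less_trans)
      then show ?thesis by simp
    qed
    then have "r \<le> z" by (rule assms[OF sch])
    with z(2) show False by simp
  qed
qed



lemma uniq3:
  fixes x :: real
  assumes "k \<ge> 1 \<and> 2/3 * (1/2)^k < x \<and> x \<le> (1/2)^k" "k' \<ge> 1 \<and> 2/3 * (1/2)^k' < x \<and> x \<le> (1/2)^k'"
  shows "k' = k"
proof (rule ccontr)
  assume ne: "k' \<noteq> k"
  have A: False if "p < q" "2/3 * (1/2)^p < x" "x \<le> (1/2)^q" for p q :: nat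
  proof -
    have "((1/2::real))^q \<le> (1/2)^(Suc p)" using that(1) by (intro power_decreasing) auto
    moreover have "(0::real) < (1/2)^p" by simp
    moreover have "(1/2::real)^(Suc p) = (1/2)^p / 2" "(1/2::real)^(p+1) = (1/2)^p / 2"
      "(1/2::real)^(q+1) = (1/2)^q / 2" "(1/2::real)^(Suc q) = (1/2)^q / 2" by simp_all
    ultimately show False using that(2,3) by argo
  qed
  show False using ne assms A[of k k'] A[of k' k] by (cases "k < k'") auto
qed

lemma uniq4:
  fixes x :: real
  assumes "k \<ge> 1 \<and> (1/2)^(k+1) < x \<and> x \<le> 2/3 * (1/2)^k" "k' \<ge> 1 \<and> (1/2)^(k'+1) < x \<and> x \<le> 2/3 * (1/2)^k'"
  shows "k' = k"
proof (rule ccontr)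
  assume ne: "k' \<noteq> k"
  have A: False if "p < q" "(1/2)^(p+1) < x" "x \<le> 2/3 * (1/2)^q" for p q :: nat
  proof -
    have "((1/2::real))^q \<le> (1/2)^(Suc p)" using that(1) by (intro power_decreasing) auto
    moreover have "(0::real) < (1/2)^p" by simp
    moreover have "(1/2::real)^(Suc p) = (1/2)^p / 2" "(1/2::real)^(p+1) = (1/2)^p / 2"
      "(1/2::real)^(q+1) = (1/2)^q / 2" "(1/2::real)^(Suc q) = (1/2)^q / 2" by simp_all
    ultimately show False using that(2,3) by argo
  qed
  show False using ne assms A[of k k'] A[of k' k] by (cases "k < k'") auto
qed

lemma h2_3:
  assumes "j \<in> S3 n h"
  shows "0 < h2_S3 (h j) \<and> h2_S3 (h j) \<le> 3/2 * h j"
proof -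
  from assms obtain k where k: "k \<ge> 1 \<and> 2/3 * (1/2)^k < h j \<and> h j \<le> (1/2)^k" unfolding S3_def by auto
  have "(THE k::nat. k \<ge> 1 \<and> 2/3 * (1/2)^k < h j \<and> h j \<le> (1/2)^k) = k"
    apply (rule the_equality) apply (rule k) by (rule uniq3[OF k])
  then have "h2_S3 (h j) = (1/2)^k" unfolding h2_S3_def by simp
  then show ?thesis using k by simp
qed

lemma h2_4:
  assumes "j \<in> S4 n h"
  shows "0 < h2_S4 (h j) \<and> h2_S4 (h j) \<le> 3/2 * h j"
proof -
  from assms obtain k where k: "k \<ge> 1 \<and> (1/2)^(k+1) < h j \<and> h j \<le> 2/3 * (1/2)^k" unfolding S4_def by auto
  have "(THE k::nat. k \<ge> 1 \<and> (1/2)^(k+1) < h j \<and> h j \<le> 2/3 * (1/2)^k) = k"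
    apply (rule the_equality) apply (rule k) by (rule uniq4[OF k])
  then have "h2_S4 (h j) = 2/3 * (1/2)^k" unfolding h2_S4_def by simp
  then show ?thesis using k by simp
qed

lemma sh3_bounds: "0 \<le> sh3 n h \<and> sh3 n h \<le> 3/2 * (\<Sum>j\<in>S3 n h. h j)"
proof -
  have "sh3 n h \<le> (\<Sum>j\<in>S3 n h. 3/2 * h j)" unfolding sh3_def by (rule sum_mono) (use h2_3 in blast)
  moreover have "0 \<le> sh3 n h" unfolding sh3_def by (rule sum_nonneg) (use h2_3 in force)
  ultimately show ?thesis by (simp add: sum_distrib_left)
qed

lemma sh4_bounds: "0 \<le> sh4 n h \<and> sh4 n h \<le> 3/2 * (\<Sum>j\<in>S4 n h. h j)"
proof -
  have "sh4 n h \<le> (\<Sum>j\<in>S4 n h. 3/2 * h j)" unfolding sh4_def by (rule sum_mono) (use h2_4 in blast)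
  moreover have "0 \<le> sh4 n h" unfolding sh4_def by (rule sum_nonneg) (use h2_4 in force)
  ultimately show ?thesis by (simp add: sum_distrib_left)
qed

lemma disj34: "S3 n h \<inter> S4 n h = {}"
proof (rule ccontr)
  assume "S3 n h \<inter> S4 n h \<noteq> {}"
  then obtain j where j3: "j \<in> S3 n h" and j4: "j \<in> S4 n h" by blast
  from j3 obtain k where k: "k \<ge> 1 \<and> 2/3 * (1/2)^k < h j \<and> h j \<le> (1/2)^k" unfolding S3_def by auto
  from j4 obtain k' where k': "k' \<ge> 1 \<and> (1/2)^(k'+1) < h j \<and> h j \<le> 2/3 * (1/2)^k'" unfolding S4_def by auto
  have A: False if "p < q" "2/3 * (1/2)^p < h j" "h j \<le> 2/3*(1/2)^q" for p q :: nat
  proof -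
    have "((1/2::real))^q \<le> (1/2)^(Suc p)" using that(1) by (intro power_decreasing) auto
    moreover have "(0::real) < (1/2)^p" by simp
    moreover have "(1/2::real)^(Suc p) = (1/2)^p / 2" "(1/2::real)^(p+1) = (1/2)^p / 2"
      "(1/2::real)^(q+1) = (1/2)^q / 2" "(1/2::real)^(Suc q) = (1/2)^q / 2" by simp_all
    ultimately show False using that(2,3) by argo
  qed
  have B: False if "q < p" "(1/2)^(q+1) < h j" "h j \<le> (1/2)^p" for p q :: nat
  proof -
    have "((1/2::real))^p \<le> (1/2)^(Suc q)" using that(1) by (intro power_decreasing) auto
    moreover have "(0::real) < (1/2)^p" by simp
    moreover have "(1/2::real)^(Suc p) = (1/2)^p / 2" "(1/2::real)^(p+1) = (1/2)^p / 2"
      "(1/2::real)^(q+1) = (1/2)^q / 2" "(1/2::real)^(Suc q) = (1/2)^q / 2" by simp_all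
    ultimately show False using that(2,3) by argo
  qed
  show False
  proof (cases k k' rule: linorder_cases)
    case less then show ?thesis using A[of k k'] k k' by auto
  next
    case equal then show ?thesis using k k' by auto
  next
    case greater then show ?thesis using B[of k' k] k k' by auto
  qed
qed

lemma sums:
  assumes vi: "valid_instance n h"
  shows "(\<Sum>j\<in>S1 n h. h j) + (\<Sum>j\<in>S2 n h. h j) + (\<Sum>j\<in>S3 n h. h j) + (\<Sum>j\<in>S4 n h. h j) \<le> (\<Sum>j\<in>{1..n}. h j)"
proof -
  have sub: "S1 n h \<subseteq> {1..n}" "S2 n h \<subseteq> {1..n}" "S3 n h \<subseteq> {1..n}" "S4 n h \<subseteq> {1..n}"
    unfolding S1_def S2_def S3_def S4_def by auto
  have fin: "finite (S1 n h)" "finite (S2 n h)" "finite (S3 n h)" "finite (S4 n h)"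
    using sub by (auto intro: finite_subset)
  have d12: "S1 n h \<inter> S2 n h = {}" unfolding S1_def S2_def by auto
  have d: "(S1 n h \<union> S2 n h) \<inter> (S3 n h \<union> S4 n h) = {}" unfolding S1_def S2_def S3_def S4_def by auto
  have "(\<Sum>j\<in>S1 n h \<union> S2 n h \<union> (S3 n h \<union> S4 n h). h j) =
      (\<Sum>j\<in>S1 n h. h j) + (\<Sum>j\<in>S2 n h. h j) + ((\<Sum>j\<in>S3 n h. h j) + (\<Sum>j\<in>S4 n h. h j))"
    using fin d d12 disj34[of n h] by (simp add: sum.union_disjoint)
  moreover have "(\<Sum>j\<in>S1 n h \<union> S2 n h \<union> (S3 n h \<union> S4 n h). h j) \<le> (\<Sum>j\<in>{1..n}. h j)"
    by (rule sum_mono2) (use sub hpos[OF vi] in \<open>auto intro: less_imp_le\<close>)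
  ultimately show ?thesis by simp
qed

lemma card12:
  shows "card (S1 n h) + card (S2 n h) \<le> n"
proof -
  have sub: "S1 n h \<union> S2 n h \<subseteq> {1..n}" unfolding S1_def S2_def by auto
  have fin: "finite (S1 n h)" "finite (S2 n h)" using sub by (auto intro: finite_subset)
  have d12: "S1 n h \<inter> S2 n h = {}" unfolding S1_def S2_def by auto
  have "card (S1 n h) + card (S2 n h) = card (S1 n h \<union> S2 n h)" using fin d12 by (simp add: card_Un_disjoint)
  also have "\<dots> \<le> card {1..n}" by (rule card_mono) (use sub in auto)
  finally show ?thesis by simp
qed

lemma S1_sum:
  assumes vi: "valid_instance n h"
  shows "1 \<in> S1 n h" "(\<Sum>j\<in>S1 n h. h j) \<ge> 1/3 + 2/3 * real (card (S1 n h))"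
proof -
  have n1: "n \<ge> 1" and h1: "h 1 = 1" using vi unfolding valid_instance_def by auto
  show one: "1 \<in> S1 n h" unfolding S1_def using n1 h1 by auto
  have fin: "finite (S1 n h)" unfolding S1_def by auto
  have "h 1 - 2/3 \<le> (\<Sum>j\<in>S1 n h. h j - 2/3)"
    by (rule member_le_sum[OF one]) (use fin in \<open>auto simp: S1_def\<close>)
  then show "(\<Sum>j\<in>S1 n h. h j) \<ge> 1/3 + 2/3 * real (card (S1 n h))" using h1 by (simp add: sum_subtractf)
qed

lemma S2_sum:
  assumes "S2 n h \<noteq> {}"
  shows "(\<Sum>j\<in>S2 n h. h j) \<ge> Max (h ` S2 n h) + (real (card (S2 n h)) - 1)/2"
    "1/2 < Max (h ` S2 n h)" "Max (h ` S2 n h) \<le> 2/3"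
proof -
  have fin: "finite (S2 n h)" unfolding S2_def by auto
  have "Max (h ` S2 n h) \<in> h ` S2 n h" using fin assms by (intro Max_in) auto
  then obtain j0 where j0: "j0 \<in> S2 n h" "Max (h ` S2 n h) = h j0" by auto
  have "h j0 - 1/2 \<le> (\<Sum>j\<in>S2 n h. h j - 1/2)"
    by (rule member_le_sum[OF j0(1)]) (use fin in \<open>auto simp: S2_def\<close>)
  moreover have "(\<Sum>j\<in>S2 n h. h j - 1/2) = (\<Sum>j\<in>S2 n h. h j) - real (card (S2 n h)) / 2"
    by (simp add: sum_subtractf)
  ultimately show "(\<Sum>j\<in>S2 n h. h j) \<ge> Max (h ` S2 n h) + (real (card (S2 n h)) - 1)/2"
    using j0 by argo
  show "1/2 < Max (h ` S2 n h)" "Max (h ` S2 n h) \<le> 2/3" using j0 unfolding S2_def by auto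
qed

lemma za_bound: "z_a n h \<le> real (card (S1 n h)) + real (card (S2 n h)) + sh3 n h + sh4 n h + 1"
proof -
  have "real_of_int \<lceil>sh3 n h - of_int \<lfloor>sh3 n h\<rfloor> + (sh4 n h - of_int \<lfloor>sh4 n h\<rfloor>)\<rceil>
     \<le> sh3 n h - of_int \<lfloor>sh3 n h\<rfloor> + (sh4 n h - of_int \<lfloor>sh4 n h\<rfloor>) + 1" by (rule of_int_ceiling_le_add_one)
  then show ?thesis unfolding z_a_def Let_def by linarith
qed

lemma zb_bound:
  assumes "S2 n h \<noteq> {}"
  shows "z_b n h \<le> ereal (2 * Max (h ` S2 n h) * (real (card (S1 n h)) + real (card (S2 n h)) / 2 + sh3 n h + sh4 n h + 1))"
proof -
  define b where "b = card (S2 n h)"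
  define f2 :: real where "f2 = (if odd b then 1/2 else 0)"
  have bd: "real (b div 2) + f2 = real b / 2" unfolding f2_def by (cases "odd b") (auto elim!: oddE)
  define y where "y = f2 + (sh3 n h - of_int \<lfloor>sh3 n h\<rfloor>) + (sh4 n h - of_int \<lfloor>sh4 n h\<rfloor>)"
  have c: "real_of_int \<lceil>y\<rceil> \<le> y + 1" by (rule of_int_ceiling_le_add_one)
  have hp: "0 < Max (h ` S2 n h)" using S2_sum(2)[OF assms] by simp
  have "real (card (S1 n h)) + real (b div 2) + of_int \<lfloor>sh3 n h\<rfloor> + of_int \<lfloor>sh4 n h\<rfloor> + of_int \<lceil>y\<rceil>
     \<le> real (card (S1 n h)) + real b / 2 + sh3 n h + sh4 n h + 1" using c bd unfolding y_def by linarith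
  then have "2 * Max (h ` S2 n h) * (real (card (S1 n h)) + real (b div 2) + of_int \<lfloor>sh3 n h\<rfloor> + of_int \<lfloor>sh4 n h\<rfloor> + of_int \<lceil>y\<rceil>)
     \<le> 2 * Max (h ` S2 n h) * (real (card (S1 n h)) + real b / 2 + sh3 n h + sh4 n h + 1)"
    using hp by (intro mult_left_mono) auto
  then show ?thesis using assms unfolding z_b_def Let_def y_def f2_def b_def by simp
qed


lemma alg_disj:
  fixes m b x l :: real
  assumes "m \<ge> 1" "b \<ge> 1" "1 < x" "x \<le> 4/3" "l \<ge> 2" "l \<ge> 2*m/3 + x/2 + b/2 - 1/6"
  shows "m+b+1 \<le> 32000/16947 * l \<or> x*(m+b/2+1) \<le> 32000/16947 * l"
  using alg[OF assms] min_le_iff_disj by blast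

theorem corollary1:
  fixes n :: nat and h :: "nat \<Rightarrow> real"
  assumes "valid_instance n h"
  shows "H_PW2 n h \<le> ereal (32000 / 16947) * opt_height n h"
proof -
  have vi: "valid_instance n h" by (rule assms)
  have n1: "n \<ge> 1" and h1: "h 1 = 1" using vi unfolding valid_instance_def by auto
  define c :: real where "c = 32000 / 16947"
  define l where "l = (\<Sum>j\<in>{1..n}. h j)"
  have ol: "ereal l \<le> opt_height n h" unfolding l_def
  proof (rule opt_ge)
    fix \<sigma> H assume "is_schedule n \<sigma>" "\<And>t j. t \<ge> 1 \<Longrightarrow> j \<in> {1..n} \<Longrightarrow> height_before_cut h \<sigma> j t \<le> H"
    then show "(\<Sum>j\<in>{1..n}. h j) \<le> H" by (rule lb(1)[OF vi])
  qed
  have o2: "ereal 2 \<le> opt_height n h" if n2: "n \<ge> 2"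
  proof (rule opt_ge)
    fix \<sigma> H assume "is_schedule n \<sigma>" "\<And>t j. t \<ge> 1 \<Longrightarrow> j \<in> {1..n} \<Longrightarrow> height_before_cut h \<sigma> j t \<le> H"
    then show "2 \<le> H" using lb(2)[OF vi] n2 by blast
  qed
  define L where "L = (if n \<ge> 2 then max l 2 else l)"
  have oL: "ereal L \<le> opt_height n h" unfolding L_def using ol o2 by (auto simp: max_def)
  have Ll: "l \<le> L" and L2: "n \<ge> 2 \<Longrightarrow> 2 \<le> L" unfolding L_def by auto
  define a where "a = real (card (S1 n h))"
  define b where "b = real (card (S2 n h))"
  define s where "s = sh3 n h + sh4 n h"
  have sums': "(\<Sum>j\<in>S1 n h. h j) + (\<Sum>j\<in>S2 n h. h j) + (\<Sum>j\<in>S3 n h. h j) + (\<Sum>j\<in>S4 n h. h j) \<le> l"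
    using sums[OF vi] unfolding l_def .
  have s1: "(\<Sum>j\<in>S1 n h. h j) \<ge> 1/3 + 2/3 * a" using S1_sum(2)[OF vi] unfolding a_def .
  have s34: "(\<Sum>j\<in>S3 n h. h j) + (\<Sum>j\<in>S4 n h. h j) \<ge> 2/3 * s" "s \<ge> 0"
    using sh3_bounds[of n h] sh4_bounds[of n h] unfolding s_def by argo+
  have s2: "(\<Sum>j\<in>S2 n h. h j) \<ge> 0" by (rule sum_nonneg) (auto simp: S2_def)
  have a1: "a \<ge> 1"
  proof -
    have "finite (S1 n h)" unfolding S1_def by auto
    then have "card (S1 n h) \<ge> 1" using S1_sum(1)[OF vi] by (metis card_0_eq empty_iff less_one not_le)
    then show ?thesis unfolding a_def by simp
  qed
  have abn: "a + b \<le> real n" using card12[of n h] unfolding a_def b_def by linarith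
  have za: "z_a n h \<le> a + b + s + 1" using za_bound[of n h] unfolding a_def b_def s_def by argo
  have cpos: "c \<ge> 1" unfolding c_def by simp
  have key: "H_PW2 n h \<le> ereal (c * L)"
  proof (cases "S2 n h = {}")
    case True
    then have H: "H_PW2 n h = ereal (z_a n h)" unfolding H_PW2_def z_b_def by simp
    have b0: "b = 0" unfolding b_def using True by simp
    show ?thesis
    proof (cases "n \<ge> 2")
      case False
      then have nn: "n = 1" using n1 by simp
      have e3: "S3 n h = {}" "S4 n h = {}" unfolding S3_def S4_def using nn h1 by auto
      have "z_a n h = a" unfolding z_a_def sh3_def sh4_def a_def using e3 True by simp
      moreover have "a = 1"
      proof -
        have "S1 n h = {1}" unfolding S1_def using nn h1 by auto
        then show ?thesis unfolding a_def by simp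
      qed
      moreover have "1 \<le> L" using Ll sums' s1 s2 s34 a1 by argo
      ultimately have "z_a n h \<le> c * L" using cpos by (metis mult_mono' mult_1_left order_trans zero_le_one)
      then show ?thesis using H by simp
    next
      case True
      have "a + s + 1 \<le> 32000/16947 * L"
        by (rule alg0) (use L2[OF True] Ll sums' s1 s2 s34 a1 in argo)+
      then show ?thesis using H za b0 unfolding c_def by simp
    qed
  next
    case False
    define M where "M = Max (h ` S2 n h)"
    have M: "1/2 < M" "M \<le> 2/3" "(\<Sum>j\<in>S2 n h. h j) \<ge> M + (b - 1)/2"
      using S2_sum[OF False] unfolding M_def b_def by auto
    have b1: "b \<ge> 1"
    proof -
      have "finite (S2 n h)" unfolding S2_def by auto
      then have "card (S2 n h) \<ge> 1" using False by (metis card_0_eq less_one not_le)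
      then show ?thesis unfolding b_def by simp
    qed
    have n2: "n \<ge> 2" using abn a1 b1 by linarith
    have zb: "z_b n h \<le> ereal ((2*M) * ((a + s) + b/2 + 1))"
    proof -
      have "z_b n h \<le> ereal (2 * M * (a + b / 2 + sh3 n h + sh4 n h + 1))"
        using zb_bound[OF False] unfolding M_def a_def b_def .
      also have "\<dots> = ereal ((2*M) * ((a + s) + b/2 + 1))"
        unfolding s_def by (simp add: algebra_simps)
      finally show ?thesis .
    qed
    have "(a+s)+b+1 \<le> 32000/16947 * L \<or> (2*M)*((a+s)+b/2+1) \<le> 32000/16947 * L"
      by (rule alg_disj) (use L2[OF n2] Ll sums' s1 s2 s34 a1 b1 M in argo)+
    then show ?thesis
    proof
      assume "(a+s)+b+1 \<le> 32000/16947 * L"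
      then have "ereal (z_a n h) \<le> ereal (c * L)" using za unfolding c_def by simp
      then show ?thesis unfolding H_PW2_def by (simp add: min_le_iff_disj)
    next
      assume "(2*M)*((a+s)+b/2+1) \<le> 32000/16947 * L"
      then have "z_b n h \<le> ereal (c * L)" using zb unfolding c_def by (meson ereal_less_eq(3) order_trans)
      then show ?thesis unfolding H_PW2_def by (simp add: min_le_iff_disj)
    qed
  qed
  also have "ereal (c * L) = ereal c * ereal L" by simp
  also have "\<dots> \<le> ereal c * opt_height n h" by (rule ereal_mult_left_mono[OF oL]) (use cpos in simp)
  finally show ?thesis unfolding c_def .
qed

end
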